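(* Let $n$ be an even integer, $Q=P^{\alpha_2}$, $w^{ss}_{\min}\in W^Q$ the element corresponding to $(\frac n2,n)$, $\xi\in X(w^{ss}_{\min})^{ss}_T(\mathcal{L}(\frac n2\omega_2))$, and $\varphi:(G_{2,n})^{ss}_T(\mathcal{L}(\frac n2\omega_2))\to T\backslash\backslash(G_{2,n})^{ss}_T(\mathcal{L}(\frac n2\omega_2))$ the GIT quotient map. If $u,v\in W^{P^{\alpha_{n/2}}}$ satisfy $\varphi(u\xi)=\varphi(v\xi)$, then $v=u$ or $v=uw_0^{S\setminus\{\alpha_{n/2}\}}$.
   Context: $G=SL(n,\mathbb{C})$, $T$ the diagonal torus, $B$ the upper triangular Borel subgroup, $W=S_n$ acting on $G/Q$ via permutation-matrix representatives (so $\varphi(u\xi)$ is independent of the representative). $G_{2,n}=G/Q$ the Grassmannian of 2-planes in $\mathbb{C}^n$, $X(u)=\overline{BuQ}/Q$ for $u\in W^Q\cong I(2,n)$. $\mathcal{L}(m\omega_2)=\mathcal{O}(m)$ for the Plücker embedding with natural $T$-linearization; $ss$ denotes $T$-semistable points; the quotient is $\mathrm{Proj}\bigoplus_dH^0(G_{2,n},\mathcal{L}(\frac n2\omega_2)^{\otimes d})^T$. $W^{P^{\alpha_{n/2}}}=\{v\in S_n:v(1)<\cdots<v(\frac n2),\ v(\frac n2+1)<\cdots<v(n)\}$, with longest element $w_0^{S\setminus\{\alpha_{n/2}\}}$: $i\mapsto\frac n2+i$, $\frac n2+i\mapsto i$. *)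

theory Defs
  imports Complex_Main "HOL-Combinatorics.Permutations"
begin

(* A 2-plane V = span{a,b} in C^n, vectors indexed by {1..n} (zero outside). *)
definition pl :: "(nat \<Rightarrow> complex) \<Rightarrow> (nat \<Rightarrow> complex) \<Rightarrow> nat \<Rightarrow> nat \<Rightarrow> complex" where
  "pl a b i j = a i * b j - a j * b i"

definition is_plane :: "nat \<Rightarrow> (nat \<Rightarrow> complex) \<Rightarrow> (nat \<Rightarrow> complex) \<Rightarrow> bool" where
  "is_plane n a b \<longleftrightarrow> (\<forall>k. k \<notin> {1..n} \<longrightarrow> a k = 0 \<and> b k = 0) \<and> (\<exists>i j. pl a b i j \<noteq> 0)"

(* Exponent data of a T-invariant Pluecker monomial in H^0(G_{2,n}, L(n/2 omega_2)^{\<otimes> d}):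
   m i j = exponent of p_{ij} (i<j); each index occurs exactly d times (weight zero). *)
definition inv_monomial :: "nat \<Rightarrow> nat \<Rightarrow> (nat \<Rightarrow> nat \<Rightarrow> nat) \<Rightarrow> bool" where
  "inv_monomial n d m \<longleftrightarrow>
     (\<forall>i j. m i j \<noteq> 0 \<longrightarrow> 1 \<le> i \<and> i < j \<and> j \<le> n) \<and>
     (\<forall>i\<in>{1..n}. (\<Sum>j\<in>{1..n}. m i j + m j i) = d)"

definition mono_val :: "nat \<Rightarrow> (nat \<Rightarrow> nat \<Rightarrow> nat) \<Rightarrow> (nat \<Rightarrow> complex) \<Rightarrow> (nat \<Rightarrow> complex) \<Rightarrow> complex" where
  "mono_val n m a b = (\<Prod>i\<in>{1..n}. \<Prod>j\<in>{1..n}. pl a b i j ^ m i j)"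

(* T-semistability w.r.t. L(n/2 omega_2): some invariant section of positive degree is nonzero *)
definition semistable :: "nat \<Rightarrow> (nat \<Rightarrow> complex) \<Rightarrow> (nat \<Rightarrow> complex) \<Rightarrow> bool" where
  "semistable n a b \<longleftrightarrow> is_plane n a b \<and>
     (\<exists>d>0. \<exists>m. inv_monomial n d m \<and> mono_val n m a b \<noteq> 0)"

(* phi(x) = phi(y) in Proj (\<Oplus>_d H^0(...)^T): the evaluations of invariants of each degree
   are proportional *)
definition same_quot :: "nat \<Rightarrow> (nat \<Rightarrow> complex) \<Rightarrow> (nat \<Rightarrow> complex) \<Rightarrow>
    (nat \<Rightarrow> complex) \<Rightarrow> (nat \<Rightarrow> complex) \<Rightarrow> bool" where
  "same_quot n a b a' b' \<longleftrightarrow>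
     (\<forall>d m m'. inv_monomial n d m \<longrightarrow> inv_monomial n d m' \<longrightarrow>
        mono_val n m a b * mono_val n m' a' b' = mono_val n m a' b' * mono_val n m' a b)"

(* Schubert variety X(w) for w = (n/2, n): V meets E_{n/2} = span{e_1..e_{n/2}} nontrivially *)
definition in_X_wmin :: "nat \<Rightarrow> (nat \<Rightarrow> complex) \<Rightarrow> (nat \<Rightarrow> complex) \<Rightarrow> bool" where
  "in_X_wmin n a b \<longleftrightarrow>
     (\<exists>s t. (s, t) \<noteq> (0, 0) \<and> (\<forall>k. n div 2 < k \<longrightarrow> s * a k + t * b k = 0))"

definition minrep_half :: "nat \<Rightarrow> (nat \<Rightarrow> nat) \<Rightarrow> bool" where
  "minrep_half n u \<longleftrightarrow> u permutes {1..n} \<and>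
     strict_mono_on {1..n div 2} u \<and> strict_mono_on {n div 2 + 1..n} u"

definition w0_half :: "nat \<Rightarrow> nat \<Rightarrow> nat" where
  "w0_half n i = (if 1 \<le> i \<and> i \<le> n div 2 then i + n div 2
                  else if n div 2 < i \<and> i \<le> n then i - n div 2 else i)"

(* permutation matrix action e_i \<mapsto> e_{u i} on vectors *)
definition perm_vec :: "(nat \<Rightarrow> nat) \<Rightarrow> (nat \<Rightarrow> complex) \<Rightarrow> nat \<Rightarrow> complex" where
  "perm_vec u a = (\<lambda>k. a (inv u k))"

end

theory Submission
  imports Defs
begin

lemma pl_antisym: "pl a b i j = - pl a b j i"
  by (simp add: pl_def)

lemma pl_perm: "pl (perm_vec u a) (perm_vec u b) i j = pl a b (inv u i) (inv u j)"
  by (simp add: pl_def perm_vec_def)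

lemma plucker: "pl a b i j * pl a b k l - pl a b i l * pl a b k j = pl a b i k * pl a b j l"
  unfolding pl_def by algebra

lemma mono_val_nz: "mono_val n m a b \<noteq> 0 \<longleftrightarrow> (\<forall>i\<in>{1..n}. \<forall>j\<in>{1..n}. m i j \<noteq> 0 \<longrightarrow> pl a b i j \<noteq> 0)"
  unfolding mono_val_def by (auto simp: prod_zero_iff)

lemma F1:
  assumes "in_X_wmin n a b" "n div 2 < i" "n div 2 < j"
  shows "pl a b i j = 0"
proof -
  obtain s t where st: "(s, t) \<noteq> (0, 0)" "\<And>k. n div 2 < k \<Longrightarrow> s * a k + t * b k = 0"
    using assms(1) unfolding in_X_wmin_def by blast
  show ?thesis
  proof (cases "s = 0")
    case True
    then have "t \<noteq> 0" using st(1) by auto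
    then have "b i = 0" "b j = 0" using st(2)[OF assms(2)] st(2)[OF assms(3)] True by auto
    then show ?thesis by (simp add: pl_def)
  next
    case False
    then have "a i = - (t / s) * b i" "a j = - (t / s) * b j"
      using st(2)[OF assms(2)] st(2)[OF assms(3)] by (auto simp: field_simps eq_neg_iff_add_eq_0)
    then show ?thesis by (simp add: pl_def)
  qed
qed


lemma F2:
  assumes ev: "even n" and ss: "semistable n a b" and X: "in_X_wmin n a b"
    and k: "k \<in> {1..n div 2}" and h: "h \<in> {n div 2 + 1..n}"
  shows "pl a b k h \<noteq> 0"
proof -
  define n2 where "n2 = n div 2"
  have nn: "n = n2 + n2" using ev unfolding n2_def by auto
  define L where "L = {1..n2}"
  define H where "H = {n2+1..n}"
  define N where "N = {1..n}"
  have NLH: "N = L \<union> H" "L \<inter> H = {}" unfolding N_def L_def H_def using nn by auto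
  have fin: "finite L" "finite H" "finite N" unfolding N_def L_def H_def by auto
  have cL: "card L = n2" "card H = n2" unfolding L_def H_def using nn by auto
  obtain d m where d: "d > 0" and inv: "inv_monomial n d m" and nz: "mono_val n m a b \<noteq> 0"
    using ss unfolding semistable_def by blast
  have supp: "\<And>i j. m i j \<noteq> 0 \<Longrightarrow> 1 \<le> i \<and> i < j \<and> j \<le> n"
    using inv unfolding inv_monomial_def by blast
  have deg: "\<And>i. i \<in> N \<Longrightarrow> (\<Sum>j\<in>N. m i j + m j i) = d"
    using inv unfolding inv_monomial_def N_def by blast
  have Pnz: "\<And>i j. m i j \<noteq> 0 \<Longrightarrow> pl a b i j \<noteq> 0"
  proof -
    fix i j assume "m i j \<noteq> 0"
    then show "pl a b i j \<noteq> 0" using nz supp[of i j] unfolding mono_val_nz by force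
  qed
  have hi0: "\<And>i j. n2 < i \<Longrightarrow> m i j = 0"
  proof (rule ccontr)
    fix i j assume "n2 < i" "m i j \<noteq> 0"
    then show False using supp[of i j] Pnz[of i j] F1[OF X, of i j] unfolding n2_def by auto
  qed
  have "(\<Sum>i\<in>L. \<Sum>j\<in>N. m i j + m j i) = (\<Sum>i\<in>L. d)"
    by (rule sum.cong[OF refl], rule deg) (use NLH in blast)
  then have sumL: "(\<Sum>i\<in>L. \<Sum>j\<in>N. m i j + m j i) = n2 * d" using cL by simp
  have "(\<Sum>i\<in>H. \<Sum>j\<in>N. m i j + m j i) = (\<Sum>i\<in>H. d)"
    by (rule sum.cong[OF refl], rule deg) (use NLH in blast)
  then have sumH: "(\<Sum>i\<in>H. \<Sum>j\<in>N. m i j + m j i) = n2 * d" using cL by simp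
  have sumH': "(\<Sum>i\<in>H. \<Sum>j\<in>N. m i j + m j i) = (\<Sum>i\<in>H. \<Sum>j\<in>L. m j i)"
  proof (rule sum.cong[OF refl])
    fix i assume i: "i \<in> H"
    then have "n2 < i" unfolding H_def by auto
    then have "(\<Sum>j\<in>N. m i j + m j i) = (\<Sum>j\<in>N. m j i)" using hi0 by simp
    also have "\<dots> = (\<Sum>j\<in>L. m j i) + (\<Sum>j\<in>H. m j i)"
      using NLH fin by (simp add: sum.union_disjoint)
    also have "(\<Sum>j\<in>H. m j i) = 0" using hi0 unfolding H_def by simp
    finally show "(\<Sum>j\<in>N. m i j + m j i) = (\<Sum>j\<in>L. m j i)" by simp
  qed
  have sumL': "(\<Sum>i\<in>L. \<Sum>j\<in>L. m i j) + (\<Sum>i\<in>L. \<Sum>j\<in>H. m i j) \<le> (\<Sum>i\<in>L. \<Sum>j\<in>N. m i j + m j i)"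
  proof -
    have "(\<Sum>i\<in>L. \<Sum>j\<in>L. m i j) + (\<Sum>i\<in>L. \<Sum>j\<in>H. m i j) = (\<Sum>i\<in>L. \<Sum>j\<in>N. m i j)"
      using NLH fin by (simp add: sum.union_disjoint sum.distrib)
    also have "\<dots> \<le> (\<Sum>i\<in>L. \<Sum>j\<in>N. m i j + m j i)"
      by (intro sum_mono) auto
    finally show ?thesis .
  qed
  have swap: "(\<Sum>i\<in>H. \<Sum>j\<in>L. m j i) = (\<Sum>i\<in>L. \<Sum>j\<in>H. m i j)"
    by (rule sum.swap)
  have "(\<Sum>i\<in>L. \<Sum>j\<in>L. m i j) = 0"
    using sumL sumH sumH' sumL' swap by linarith
  then have LL: "\<And>i j. i \<in> L \<Longrightarrow> j \<in> L \<Longrightarrow> m i j = 0"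
    using fin by (simp add: sum_eq_0_iff)
  have kL: "k \<in> L" "k \<in> N" using k NLH unfolding L_def n2_def by auto
  have hH: "h \<in> H" "h \<in> N" using h NLH unfolding H_def n2_def by auto
  have "\<exists>j\<in>N. m k j + m j k \<noteq> 0"
  proof (rule ccontr)
    assume "\<not> ?thesis"
    then have "(\<Sum>j\<in>N. m k j + m j k) = 0" by simp
    then show False using deg[OF kL(2)] d by simp
  qed
  then obtain j0 where j0: "j0 \<in> N" "m k j0 + m j0 k \<noteq> 0" by blast
  have "j0 \<notin> L" using LL[OF kL(1)] LL[OF _ kL(1)] j0 by auto
  then have j0H: "n2 < j0" using j0 NLH unfolding L_def H_def by auto
  then have "m k j0 \<noteq> 0" using j0 hi0 by auto
  then have P1: "pl a b k j0 \<noteq> 0" by (rule Pnz)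
  have "\<exists>j\<in>N. m h j + m j h \<noteq> 0"
  proof (rule ccontr)
    assume "\<not> ?thesis"
    then have "(\<Sum>j\<in>N. m h j + m j h) = 0" by simp
    then show False using deg[OF hH(2)] d by simp
  qed
  then obtain i0 where i0: "i0 \<in> N" "m h i0 + m i0 h \<noteq> 0" by blast
  have "n2 < h" using hH unfolding H_def by auto
  then have "m i0 h \<noteq> 0" using i0 hi0 by auto
  then have P2: "pl a b i0 h \<noteq> 0" by (rule Pnz)
  have "pl a b h j0 = 0" using F1[OF X, of h j0] \<open>n2 < h\<close> j0H unfolding n2_def by auto
  then have "pl a b k h * pl a b i0 j0 = pl a b k j0 * pl a b i0 h"
    using plucker[of a b k h i0 j0] by simp
  with P1 P2 show ?thesis by auto
qed


lemma smono_aux: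
  fixes f g :: "nat \<Rightarrow> nat"
  assumes f: "strict_mono_on I f" and g: "strict_mono_on I g" and sub: "f ` I \<subseteq> g ` I"
    and x: "x \<in> I" and IH: "\<And>y. y \<in> I \<Longrightarrow> y < x \<Longrightarrow> f y = g y"
  shows "\<not> f x < g x"
proof
  assume lt: "f x < g x"
  obtain y where y: "y \<in> I" "f x = g y" using sub x by blast
  have "y < x"
  proof (rule ccontr)
    assume "\<not> y < x"
    then have "x = y \<or> x < y" by auto
    then have "g x \<le> g y" using g x y(1) by (auto dest: strict_mono_onD)
    then show False using lt y by simp
  qed
  then have "f y < f x" using f y(1) x by (auto dest: strict_mono_onD)
  moreover have "f y = g y" using IH[OF y(1) \<open>y < x\<close>] .
  ultimately show False using y by simp
qed

lemma smono_unique: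
  fixes f g :: "nat \<Rightarrow> nat"
  assumes f: "strict_mono_on I f" and g: "strict_mono_on I g" and eq: "f ` I = g ` I"
  shows "x \<in> I \<Longrightarrow> f x = g x"
proof (induction x rule: less_induct)
  case (less x)
  have "\<not> f x < g x" by (rule smono_aux[OF f g _ less.prems]) (use eq less.IH in auto)
  moreover have "\<not> g x < f x" by (rule smono_aux[OF g f _ less.prems]) (use eq less.IH in auto)
  ultimately show ?case by simp
qed

lemma minrep_img:
  assumes "minrep_half n u" "even n"
  shows "u ` {1..n div 2} \<union> u ` {n div 2 + 1..n} = {1..n}"
    "u ` {1..n div 2} \<inter> u ` {n div 2 + 1..n} = {}"
    "card (u ` {1..n div 2}) = n div 2" "card (u ` {n div 2 + 1..n}) = n div 2"
proof -
  have p: "u permutes {1..n}" using assms unfolding minrep_half_def by auto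
  have "{1..n} = {1..n div 2} \<union> {n div 2 + 1..n}" by auto
  then show "u ` {1..n div 2} \<union> u ` {n div 2 + 1..n} = {1..n}"
    using permutes_image[OF p] by (metis image_Un)
  have inj: "inj u" using p permutes_inj by blast
  show "u ` {1..n div 2} \<inter> u ` {n div 2 + 1..n} = {}"
    using inj by (auto simp: inj_eq)
  show "card (u ` {1..n div 2}) = n div 2" "card (u ` {n div 2 + 1..n}) = n div 2"
    using inj assms(2) by (auto simp: card_image inj_on_subset)
qed

lemma minrep_compl:
  assumes "minrep_half n u" "even n"
  shows "u ` {n div 2 + 1..n} = {1..n} - u ` {1..n div 2}"
  using minrep_img(1,2)[OF assms] by blast

lemma case_same:
  assumes ev: "even n" and u: "minrep_half n u" and v: "minrep_half n v"
    and sub: "u ` {1..n div 2} \<subseteq> v ` {1..n div 2}"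
  shows "v = u"
proof -
  note iu = minrep_img[OF u ev] and iv = minrep_img[OF v ev]
  have eqL: "u ` {1..n div 2} = v ` {1..n div 2}"
  proof (rule card_subset_eq)
    show "finite (v ` {1..n div 2})" by simp
    show "u ` {1..n div 2} \<subseteq> v ` {1..n div 2}" by (rule sub)
    show "card (u ` {1..n div 2}) = card (v ` {1..n div 2})" using iu(3) iv(3) by simp
  qed
  have eqH: "u ` {n div 2 + 1..n} = v ` {n div 2 + 1..n}"
    using minrep_compl[OF u ev] minrep_compl[OF v ev] eqL by simp
  have su: "strict_mono_on {1..n div 2} u" "strict_mono_on {n div 2 + 1..n} u"
    and sv: "strict_mono_on {1..n div 2} v" "strict_mono_on {n div 2 + 1..n} v"
    and pu: "u permutes {1..n}" and pv: "v permutes {1..n}"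
    using u v unfolding minrep_half_def by auto
  show "v = u"
  proof
    fix x
    show "v x = u x"
    proof (cases "x \<in> {1..n div 2}")
      case True
      show ?thesis using smono_unique[OF su(1) sv(1) eqL True] by simp
    next
      case F: False
      show ?thesis
      proof (cases "x \<in> {n div 2 + 1..n}")
        case True
        show ?thesis using smono_unique[OF su(2) sv(2) eqH True] by simp
      next
        case False
        then have "x \<notin> {1..n}" using F by auto
        then show ?thesis using permutes_not_in[OF pu] permutes_not_in[OF pv] by simp
      qed
    qed
  qed
qed

lemma case_swap:
  assumes ev: "even n" and u: "minrep_half n u" and v: "minrep_half n v"
    and sub: "u ` {n div 2 + 1..n} \<subseteq> v ` {1..n div 2}"
  shows "v = u \<circ> w0_half n"
proof -
  define n2 where "n2 = n div 2"
  have nn: "n = n2 + n2" using ev unfolding n2_def by auto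
  note iu = minrep_img[OF u ev] and iv = minrep_img[OF v ev]
  have eqL: "u ` {n2 + 1..n} = v ` {1..n2}"
  proof (rule card_subset_eq)
    show "finite (v ` {1..n2})" by simp
    show "u ` {n2 + 1..n} \<subseteq> v ` {1..n2}" using sub unfolding n2_def .
    show "card (u ` {n2 + 1..n}) = card (v ` {1..n2})" using iu(4) iv(3) unfolding n2_def by simp
  qed
  have eqH: "u ` {1..n2} = v ` {n2 + 1..n}"
  proof -
    have "u ` {1..n2} = {1..n} - u ` {n2 + 1..n}" using iu(1,2) unfolding n2_def by blast
    also have "\<dots> = {1..n} - v ` {1..n2}" using eqL by simp
    also have "\<dots> = v ` {n2 + 1..n}" using minrep_compl[OF v ev] unfolding n2_def by simp
    finally show ?thesis .
  qed
  have su: "strict_mono_on {1..n2} u" "strict_mono_on {n2+1..n} u"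
    and sv: "strict_mono_on {1..n2} v" "strict_mono_on {n2+1..n} v"
    and pu: "u permutes {1..n}" and pv: "v permutes {1..n}"
    using u v unfolding minrep_half_def n2_def by auto
  show ?thesis
  proof
    fix x
    show "v x = (u \<circ> w0_half n) x"
    proof (cases "x \<in> {1..n2}")
      case True
      have sm: "strict_mono_on {1..n2} (\<lambda>y. u (y + n2))"
        proof (rule strict_mono_onI)
        fix r s :: nat assume "r \<in> {1..n2}" "s \<in> {1..n2}" "r < s"
        then show "u (r + n2) < u (s + n2)" using nn by (intro strict_mono_onD[OF su(2)]) auto
      qed
      have im: "(\<lambda>y. u (y + n2)) ` {1..n2} = u ` {n2+1..n}"
      proof -
        have "(\<lambda>y. u (y + n2)) ` {1..n2} = u ` ((\<lambda>y. y + n2) ` {1..n2})" by (rule image_image[symmetric])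
        also have "(\<lambda>y. y + n2) ` {1..n2} = {n2+1..n}" using nn by simp
        finally show ?thesis .
      qed
      have "v x = u (x + n2)"
        using smono_unique[OF sv(1) sm _ True] eqL im by simp
      then show ?thesis using True unfolding w0_half_def n2_def by simp
    next
      case F: False
      show ?thesis
      proof (cases "x \<in> {n2 + 1..n}")
        case True
        have sm: "strict_mono_on {n2+1..n} (\<lambda>y. u (y - n2))"
          proof (rule strict_mono_onI)
          fix r s :: nat assume "r \<in> {n2+1..n}" "s \<in> {n2+1..n}" "r < s"
          then show "u (r - n2) < u (s - n2)" using nn by (intro strict_mono_onD[OF su(1)]) auto
        qed
        have im: "(\<lambda>y. u (y - n2)) ` {n2+1..n} = u ` {1..n2}"
        proof -
          have "(\<lambda>y. u (y - n2)) ` {n2+1..n} = u ` ((\<lambda>y. y - n2) ` {n2+1..n})" by (rule image_image[symmetric])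
          also have "(\<lambda>y. y - n2) ` {n2+1..n} = {1..n2}"
          proof
            show "(\<lambda>y. y - n2) ` {n2+1..n} \<subseteq> {1..n2}" using nn by auto
            show "{1..n2} \<subseteq> (\<lambda>y. y - n2) ` {n2+1..n}"
            proof
              fix z assume "z \<in> {1..n2}"
              then show "z \<in> (\<lambda>y. y - n2) ` {n2+1..n}"
                using nn by (intro image_eqI[where x = "z + n2"]) auto
            qed
          qed
          finally show ?thesis .
        qed
        have "v x = u (x - n2)"
          using smono_unique[OF sv(2) sm _ True] eqH im by simp
        moreover have "w0_half n x = x - n2" using True F unfolding w0_half_def n2_def by auto
        ultimately show ?thesis by simp
      next
        case False
        then have "x \<notin> {1..n}" using F nn by auto
        then have "v x = x" "u x = x" using permutes_not_in[OF pu] permutes_not_in[OF pv] by auto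
        moreover have "w0_half n x = x" using \<open>x \<notin> {1..n}\<close> unfolding w0_half_def by auto
        ultimately show ?thesis by simp
      qed
    qed
  qed
qed


definition mmatch :: "nat \<Rightarrow> (nat \<Rightarrow> nat) \<Rightarrow> nat \<Rightarrow> nat \<Rightarrow> nat" where
  "mmatch n g x y = (if x \<in> {1..n} \<and> x < y \<and> g x = y then 1 else 0)"

lemma mmatch_inv:
  assumes g: "\<forall>x\<in>{1..n}. g x \<in> {1..n} \<and> g (g x) = x \<and> g x \<noteq> x"
  shows "inv_monomial n 1 (mmatch n g)"
  unfolding inv_monomial_def
proof (rule conjI)
  show "\<forall>i j. mmatch n g i j \<noteq> 0 \<longrightarrow> 1 \<le> i \<and> i < j \<and> j \<le> n"
  proof (intro allI impI)
    fix i j assume "mmatch n g i j \<noteq> 0"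
    then show "1 \<le> i \<and> i < j \<and> j \<le> n" using g unfolding mmatch_def
      by (auto split: if_splits)
  qed
next
  show "\<forall>i\<in>{1..n}. (\<Sum>j\<in>{1..n}. mmatch n g i j + mmatch n g j i) = 1"
  proof
  fix i assume i: "i \<in> {1..n}"
  have "(\<Sum>j\<in>{1..n}. mmatch n g i j + mmatch n g j i) = (\<Sum>j\<in>{1..n}. if j = g i then 1 else 0)"
  proof (rule sum.cong[OF refl])
    fix j assume j: "j \<in> {1..n}"
    show "mmatch n g i j + mmatch n g j i = (if j = g i then 1 else 0)"
    proof (cases "j = g i")
      case True
      then have "g j = i" using g i by auto
      moreover have "g i \<noteq> i" using g i by auto
      ultimately show ?thesis using True i j unfolding mmatch_def by auto
    next
      case False
      have "g j \<noteq> i" using g j False by auto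
      then show ?thesis using False unfolding mmatch_def by auto
    qed
  qed
  also have "\<dots> = 1" using g i by simp
  finally show "(\<Sum>j\<in>{1..n}. mmatch n g i j + mmatch n g j i) = 1" .
  qed
qed

lemma mmatch_nz:
  assumes g: "\<forall>x\<in>{1..n}. g x \<in> {1..n} \<and> g (g x) = x \<and> g x \<noteq> x"
    and P: "\<forall>x\<in>{1..n}. pl a b x (g x) \<noteq> 0"
  shows "mono_val n (mmatch n g) a b \<noteq> 0"
  unfolding mono_val_nz
proof (intro ballI impI)
  fix i j assume "i \<in> {1..n}" "j \<in> {1..n}" "mmatch n g i j \<noteq> 0"
  then have "j = g i" unfolding mmatch_def by (auto split: if_splits)
  then show "pl a b i j \<noteq> 0" using P \<open>i \<in> {1..n}\<close> by simp
qed

lemma mmatch_z: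
  assumes g: "\<forall>x\<in>{1..n}. g x \<in> {1..n} \<and> g (g x) = x \<and> g x \<noteq> x"
    and x: "x \<in> {1..n}" and P: "pl a b x (g x) = 0"
  shows "mono_val n (mmatch n g) a b = 0"
proof -
  have gx: "g x \<in> {1..n}" "g (g x) = x" "g x \<noteq> x" using g x by auto
  show ?thesis
  proof (cases "x < g x")
    case True
    then have "mmatch n g x (g x) \<noteq> 0" using x unfolding mmatch_def by auto
    then show ?thesis using mono_val_nz[of n "mmatch n g" a b] x gx P by blast
  next
    case False
    then have "g x < x" using gx(3) by auto
    then have "mmatch n g (g x) x \<noteq> 0" using gx unfolding mmatch_def by auto
    moreover have "pl a b (g x) x = 0" using P pl_antisym[of a b "g x" x] by simp
    ultimately show ?thesis using mono_val_nz[of n "mmatch n g" a b] x gx by blast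
  qed
qed

lemma conj_props:
  assumes p: "p permutes {1..n}"
    and s: "\<forall>x\<in>{1..n}. \<sigma> x \<in> {1..n} \<and> \<sigma> (\<sigma> x) = x \<and> \<sigma> x \<noteq> x"
  shows "\<forall>x\<in>{1..n}. (p \<circ> \<sigma> \<circ> inv p) x \<in> {1..n} \<and> (p \<circ> \<sigma> \<circ> inv p) ((p \<circ> \<sigma> \<circ> inv p) x) = x
     \<and> (p \<circ> \<sigma> \<circ> inv p) x \<noteq> x"
proof
  fix x assume x: "x \<in> {1..n}"
  have ip: "inv p permutes {1..n}" using permutes_inv[OF p] .
  have y: "inv p x \<in> {1..n}" using permutes_in_image[OF ip] x by simp
  have iv: "\<And>z. inv p (p z) = z" "\<And>z. p (inv p z) = z" using permutes_inverses[OF p] by auto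
  have "p (\<sigma> (inv p x)) \<in> {1..n}" using permutes_in_image[OF p] s y by simp
  moreover have "p (\<sigma> (inv p (p (\<sigma> (inv p x))))) = x" using iv s y by simp
  moreover have "p (\<sigma> (inv p x)) \<noteq> x"
  proof
    assume "p (\<sigma> (inv p x)) = x"
    then have "\<sigma> (inv p x) = inv p x" using iv by (metis)
    then show False using s y by auto
  qed
  ultimately show "(p \<circ> \<sigma> \<circ> inv p) x \<in> {1..n} \<and> (p \<circ> \<sigma> \<circ> inv p) ((p \<circ> \<sigma> \<circ> inv p) x) = x
     \<and> (p \<circ> \<sigma> \<circ> inv p) x \<noteq> x" by simp
qed

lemma sigma_props:
  fixes W :: "nat \<Rightarrow> nat" and N :: "nat set"
  assumes W: "\<And>x. x \<in> N \<Longrightarrow> W x \<in> N \<and> W (W x) = x \<and> (Q x \<longleftrightarrow> \<not> Q (W x))"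
    and k: "k \<in> N" "Q k" and h: "h \<in> N" "\<not> Q h"
    and sd: "\<sigma> = (\<lambda>x. if x = k then h else if x = h then k else if x = W h then W k
                     else if x = W k then W h else W x)"
    and x: "x \<in> N"
  shows "\<sigma> x \<in> N \<and> \<sigma> (\<sigma> x) = x \<and> (Q x \<longleftrightarrow> \<not> Q (\<sigma> x))"
proof -
  have Wk: "W k \<in> N" "W (W k) = k" "\<not> Q (W k)" using W[OF k(1)] k by auto
  have Wh: "W h \<in> N" "W (W h) = h" "Q (W h)" using W[OF h(1)] h by auto
  have Wx: "W x \<in> N" "W (W x) = x" "Q x \<longleftrightarrow> \<not> Q (W x)" using W[OF x] by auto
  show ?thesis unfolding sd using k h Wk Wh Wx x by (smt (verit))
qed


lemma W_props:
  assumes ev: "even n" and x: "x \<in> {1..n}"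
  shows "w0_half n x \<in> {1..n} \<and> w0_half n (w0_half n x) = x \<and>
         (x \<le> n div 2 \<longleftrightarrow> \<not> w0_half n x \<le> n div 2)"
proof -
  have nn: "n = n div 2 + n div 2" using ev by auto
  show ?thesis using x nn unfolding w0_half_def by auto
qed

lemma pl_cross:
  assumes ev: "even n" and ss: "semistable n a b" and X: "in_X_wmin n a b"
    and x: "x \<in> {1..n}" and y: "y \<in> {1..n}" and xy: "x \<le> n div 2 \<longleftrightarrow> \<not> y \<le> n div 2"
  shows "pl a b x y \<noteq> 0"
proof (cases "x \<le> n div 2")
  case True
  then show ?thesis using F2[OF ev ss X, of x y] x y xy by auto
next
  case False
  then have "pl a b y x \<noteq> 0" using F2[OF ev ss X, of y x] x y xy by auto
  then show ?thesis using pl_antisym[of a b x y] by simp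
qed

theorem lemma7p9:
  fixes n :: nat and a b :: "nat \<Rightarrow> complex" and u v :: "nat \<Rightarrow> nat"
  assumes "even n"
    and "semistable n a b" and "in_X_wmin n a b"
    and "minrep_half n u" and "minrep_half n v"
    and "same_quot n (perm_vec u a) (perm_vec u b) (perm_vec v a) (perm_vec v b)"
  shows "v = u \<or> v = u \<circ> w0_half n"
proof (rule ccontr)
  assume neg: "\<not> (v = u \<or> v = u \<circ> w0_half n)"
  note ev = assms(1) and ss = assms(2) and X = assms(3) and u = assms(4) and v = assms(5)
    and sq = assms(6)
  define n2 where "n2 = n div 2"
  define N where "N = {1..n}"
  have nn: "n = n2 + n2" using ev unfolding n2_def by auto
  have pu: "u permutes N" and pv: "v permutes N" using u v unfolding minrep_half_def N_def by auto
  have ivu: "\<And>z. inv u (u z) = z" "\<And>z. u (inv u z) = z" using permutes_inverses[OF pu] by auto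
  have ivv: "\<And>z. inv v (v z) = z" "\<And>z. v (inv v z) = z" using permutes_inverses[OF pv] by auto
  have "\<not> u ` {1..n2} \<subseteq> v ` {1..n2}" using case_same[OF ev u v] neg unfolding n2_def by auto
  then obtain k where k: "k \<in> {1..n2}" "u k \<notin> v ` {1..n2}" by blast
  have "\<not> u ` {n2+1..n} \<subseteq> v ` {1..n2}" using case_swap[OF ev u v] neg unfolding n2_def by auto
  then obtain h where h: "h \<in> {n2+1..n}" "u h \<notin> v ` {1..n2}" by blast
  have kN: "k \<in> N" "k \<le> n2" and hN: "h \<in> N" "\<not> h \<le> n2" using k h nn unfolding N_def by auto
  have ukN: "u k \<in> N" "u h \<in> N" using permutes_in_image[OF pu] kN hN by auto
  have vH: "\<And>z. z \<in> N \<Longrightarrow> z \<notin> v ` {1..n2} \<Longrightarrow> n2 < inv v z"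
  proof -
    fix z assume z: "z \<in> N" "z \<notin> v ` {1..n2}"
    have "inv v z \<in> N" using permutes_in_image[OF permutes_inv[OF pv]] z by simp
    moreover have "inv v z \<notin> {1..n2}" using z ivv by (metis image_eqI)
    ultimately show "n2 < inv v z" unfolding N_def by auto
  qed
  have kk: "n2 < inv v (u k)" using vH ukN k by blast
  have hh: "n2 < inv v (u h)" using vH ukN h by blast
  define W where "W = w0_half n"
  have WP: "\<And>x. x \<in> N \<Longrightarrow> W x \<in> N \<and> W (W x) = x \<and> (x \<le> n2 \<longleftrightarrow> \<not> W x \<le> n2)"
    using W_props[OF ev] unfolding W_def N_def n2_def by blast
  define \<sigma> where "\<sigma> = (\<lambda>x. if x = k then h else if x = h then k else if x = W h then W k
                     else if x = W k then W h else W x)"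
  have SP: "\<And>x. x \<in> N \<Longrightarrow> \<sigma> x \<in> N \<and> \<sigma> (\<sigma> x) = x \<and> (x \<le> n2 \<longleftrightarrow> \<not> \<sigma> x \<le> n2)"
    by (rule sigma_props[OF WP kN(1,2) hN(1,2) \<sigma>_def])
  have Ws: "\<forall>x\<in>{1..n}. W x \<in> {1..n} \<and> W (W x) = x \<and> W x \<noteq> x"
    using WP unfolding N_def by fastforce
  have Ss: "\<forall>x\<in>{1..n}. \<sigma> x \<in> {1..n} \<and> \<sigma> (\<sigma> x) = x \<and> \<sigma> x \<noteq> x"
    using SP unfolding N_def by fastforce
  define gu where "gu = u \<circ> \<sigma> \<circ> inv u"
  define gv where "gv = v \<circ> W \<circ> inv v"
  have gu: "\<forall>x\<in>{1..n}. gu x \<in> {1..n} \<and> gu (gu x) = x \<and> gu x \<noteq> x"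
    unfolding gu_def by (rule conj_props[OF pu[unfolded N_def] Ss])
  have gv: "\<forall>x\<in>{1..n}. gv x \<in> {1..n} \<and> gv (gv x) = x \<and> gv x \<noteq> x"
    unfolding gv_def by (rule conj_props[OF pv[unfolded N_def] Ws])
  have m1: "mono_val n (mmatch n gu) (perm_vec u a) (perm_vec u b) \<noteq> 0"
  proof (rule mmatch_nz[OF gu], intro ballI)
    fix x assume x: "x \<in> {1..n}"
    have y: "inv u x \<in> N" using permutes_in_image[OF permutes_inv[OF pu]] x unfolding N_def by simp
    have "pl (perm_vec u a) (perm_vec u b) x (gu x) = pl a b (inv u x) (\<sigma> (inv u x))"
      unfolding pl_perm gu_def using ivu by simp
    also have "\<dots> \<noteq> 0" using pl_cross[OF ev ss X] y SP[OF y] unfolding N_def n2_def by blast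
    finally show "pl (perm_vec u a) (perm_vec u b) x (gu x) \<noteq> 0" .
  qed
  have m2: "mono_val n (mmatch n gv) (perm_vec v a) (perm_vec v b) \<noteq> 0"
  proof (rule mmatch_nz[OF gv], intro ballI)
    fix x assume x: "x \<in> {1..n}"
    have y: "inv v x \<in> N" using permutes_in_image[OF permutes_inv[OF pv]] x unfolding N_def by simp
    have "pl (perm_vec v a) (perm_vec v b) x (gv x) = pl a b (inv v x) (W (inv v x))"
      unfolding pl_perm gv_def using ivv by simp
    also have "\<dots> \<noteq> 0" using pl_cross[OF ev ss X] y WP[OF y] unfolding N_def n2_def by blast
    finally show "pl (perm_vec v a) (perm_vec v b) x (gv x) \<noteq> 0" .
  qed
  have "\<sigma> k = h" unfolding \<sigma>_def by simp
  then have guk: "gu (u k) = u h" unfolding gu_def using ivu by simp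
  have m3: "mono_val n (mmatch n gu) (perm_vec v a) (perm_vec v b) = 0"
  proof (rule mmatch_z[OF gu])
    show "u k \<in> {1..n}" using ukN unfolding N_def by simp
    show "pl (perm_vec v a) (perm_vec v b) (u k) (gu (u k)) = 0"
      unfolding guk pl_perm using F1[OF X] kk hh unfolding n2_def by blast
  qed
  have "mono_val n (mmatch n gu) (perm_vec u a) (perm_vec u b) * mono_val n (mmatch n gv) (perm_vec v a) (perm_vec v b)
      = mono_val n (mmatch n gu) (perm_vec v a) (perm_vec v b) * mono_val n (mmatch n gv) (perm_vec u a) (perm_vec u b)"
    using sq mmatch_inv[OF gu] mmatch_inv[OF gv] unfolding same_quot_def by blast
  then show False using m1 m2 m3 by simp
qed

end
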